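(* Let $\mathsf{X}$ be a retract of a qcb-space $\mathsf{Y}$. If $\mathsf{Y}$ satisfies Normann's condition, then so does $\mathsf{X}$.
   Context: A qcb-space is a topological quotient of a countably based space. $\mathsf{X}$ is a retract of $\mathsf{Y}$ if there are continuous $e\colon\mathsf{X}\to\mathsf{Y}$ and $r\colon\mathsf{Y}\to\mathsf{X}$ with $r\circ e=\mathrm{id}_{\mathsf{X}}$. A subset $A$ of a space $Z$ is functionally closed if $A=\varphi^{-1}[\{0\}]$ for some continuous $\varphi\colon Z\to[0,1]$. A space satisfies Normann's condition if every functionally closed subset is an intersection of clopen sets. *)

theory Defs
  imports "HOL-Analysis.Analysis"
begin

text \<open>A qcb-space: a topological quotient of a countably based (second countable) space.
  The countably based space lives on a type 'c that is supplied as a parameter.\<close>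
definition qcb_via :: "'c itself \<Rightarrow> 'b topology \<Rightarrow> bool" where
  "qcb_via _ Y \<longleftrightarrow> (\<exists>(Z::'c topology) q. second_countable Z \<and> quotient_map Z Y q)"

definition is_retract :: "'a topology \<Rightarrow> 'b topology \<Rightarrow> bool" where
  "is_retract X Y \<longleftrightarrow> (\<exists>e r. continuous_map X Y e \<and> continuous_map Y X r \<and>
      (\<forall>x \<in> topspace X. r (e x) = x))"

definition functionally_closed :: "'a topology \<Rightarrow> 'a set \<Rightarrow> bool" where
  "functionally_closed Z A \<longleftrightarrow>
     (\<exists>\<phi>. continuous_map Z (top_of_set {0..1::real}) \<phi> \<and> A = {x \<in> topspace Z. \<phi> x = 0})"

definition normann_condition :: "'a topology \<Rightarrow> bool" where
  "normann_condition Z \<longleftrightarrow>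
     (\<forall>A. functionally_closed Z A \<longrightarrow>
        (\<exists>\<C>. (\<forall>C \<in> \<C>. openin Z C \<and> closedin Z C) \<and> A = topspace Z \<inter> \<Inter>\<C>))"

end

theory Submission
  imports Defs
begin

theorem lemma4p1:
  fixes X :: "'a topology" and Y :: "'b topology"
  assumes "qcb_via TYPE('c) Y"
    and "is_retract X Y"
    and "normann_condition Y"
  shows "normann_condition X"
  unfolding normann_condition_def
proof (intro allI impI)
  fix A assume "functionally_closed X A"
  then obtain \<phi> where phi: "continuous_map X (top_of_set {0..1::real}) \<phi>"
    and A: "A = {x \<in> topspace X. \<phi> x = 0}" unfolding functionally_closed_def by blast
  obtain e r where e: "continuous_map X Y e" and r: "continuous_map Y X r"
    and re: "\<forall>x \<in> topspace X. r (e x) = x" using assms(2) unfolding is_retract_def by blast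
  have fc: "functionally_closed Y {y \<in> topspace Y. \<phi> (r y) = 0}"
    unfolding functionally_closed_def
  proof (intro exI conjI)
    show "continuous_map Y (top_of_set {0..1::real}) (\<phi> \<circ> r)"
      by (rule continuous_map_compose[OF r phi])
    show "{y \<in> topspace Y. \<phi> (r y) = 0} = {x \<in> topspace Y. (\<phi> \<circ> r) x = 0}"
      by simp
  qed
  then obtain \<C> where C: "\<forall>C \<in> \<C>. openin Y C \<and> closedin Y C"
    and B: "{y \<in> topspace Y. \<phi> (r y) = 0} = topspace Y \<inter> \<Inter>\<C>"
    using assms(3)[unfolded normann_condition_def, rule_format, OF fc] by (elim exE conjE)
  define \<D> where "\<D> = (\<lambda>C. {x \<in> topspace X. e x \<in> C}) ` \<C>"
  have "\<forall>D \<in> \<D>. openin X D \<and> closedin X D"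
    unfolding \<D>_def using C e
    by (auto intro: openin_continuous_map_preimage closedin_continuous_map_preimage)
  moreover have "A = topspace X \<inter> \<Inter>\<D>"
  proof -
    have "x \<in> A \<longleftrightarrow> x \<in> topspace X \<inter> \<Inter>\<D>" for x
    proof (cases "x \<in> topspace X")
      case True
      then have ex: "e x \<in> topspace Y" using continuous_map_image_subset_topspace[OF e] True by blast
      have "x \<in> A \<longleftrightarrow> e x \<in> {y \<in> topspace Y. \<phi> (r y) = 0}"
        using True ex re A by auto
      also have "\<dots> \<longleftrightarrow> (\<forall>C\<in>\<C>. e x \<in> C)" using B ex by blast
      also have "\<dots> \<longleftrightarrow> x \<in> topspace X \<inter> \<Inter>\<D>" using True unfolding \<D>_def by auto
      finally show ?thesis .
    next
      case False then show ?thesis using A by auto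
    qed
    then show ?thesis by blast
  qed
  ultimately show "\<exists>\<C>. (\<forall>C\<in>\<C>. openin X C \<and> closedin X C) \<and> A = topspace X \<inter> \<Inter> \<C>"
    by blast
qed

end
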